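(* Let $H(a,b,c)=C(a,b+c)-C(b,a+c)$. Then for all non-negative integers $a,b,c$, \[\frac{1}{4^c}H(a,b,c)=\sum_{j=1}^c\frac{1}{4^j}H(b+1,a+1,j-2).\]
   Context: $C(p,q)=\frac{(2p)!(2q)!}{p!(p+q)!q!}$ for non-negative integers $p,q$. Note $H(b+1,a+1,j-2)=C(b+1,a+j-1)-C(a+1,b+j-1)$, whose arguments are non-negative for $j\ge1$. *)

theory Defs
  imports Main "HOL.Rat"
begin

definition superC :: "nat \<Rightarrow> nat \<Rightarrow> rat" where
  "superC p q = of_nat (fact (2*p) * fact (2*q)) / of_nat (fact p * fact (p+q) * fact q)"

text \<open>H(a,b,c) = C(a,b+c) - C(b,a+c). The third argument is an integer so that
  H(b+1,a+1,j-2) with j = 1 (i.e. c = -1) makes sense; it is only used where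
  b+c and a+c are non-negative.\<close>
definition H :: "nat \<Rightarrow> nat \<Rightarrow> int \<Rightarrow> rat" where
  "H a b c = superC a (nat (int b + c)) - superC b (nat (int a + c))"

end

theory Submission
  imports Defs
begin

lemma gA: "(c::rat) \<noteq> 0 \<Longrightarrow> d \<noteq> 0 \<Longrightarrow> P \<noteq> 0 \<Longrightarrow> Q \<noteq> 0 \<Longrightarrow> R \<noteq> 0 \<Longrightarrow>
  ((2*c*e*X)*Y)/((c*P)*(d*Q)*R)*d = 2*e*(X*Y/(P*Q*R))"
  by (simp add: field_simps)

lemma gB: "(c::rat) \<noteq> 0 \<Longrightarrow> d \<noteq> 0 \<Longrightarrow> P \<noteq> 0 \<Longrightarrow> Q \<noteq> 0 \<Longrightarrow> R \<noteq> 0 \<Longrightarrow>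
  (X*(2*c*e*Y))/(P*(d*Q)*(c*R))*d = 2*e*(X*Y/(P*Q*R))"
  by (simp add: field_simps)

lemma stepA: "superC (Suc m) n * of_nat (m+n+1) = of_nat (2*(2*m+1)) * superC m n"
proof -
  have f1: "fact (2 * Suc m) = (2*(m+1))*(2*m+1)*(fact (2*m) :: nat)"
    by (simp add: algebra_simps)
  have f2: "fact (Suc m) = (m+1) * (fact m :: nat)" by simp
  have f3: "fact (Suc m + n) = (m+n+1) * (fact (m+n) :: nat)" by simp
  have "superC (Suc m) n * of_nat (m+n+1) = 2 * of_nat (2*m+1) * superC m n"
    unfolding superC_def f1 f2 f3 of_nat_mult of_nat_numeral
    by (rule gA) (simp del: of_nat_Suc of_nat_add add: of_nat_eq_0_iff)+
  then show ?thesis by simp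
qed

lemma stepB: "superC m (Suc n) * of_nat (m+n+1) = of_nat (2*(2*n+1)) * superC m n"
proof -
  have f1: "fact (2 * Suc n) = (2*(n+1))*(2*n+1)*(fact (2*n) :: nat)"
    by (simp add: algebra_simps)
  have f2: "fact (Suc n) = (n+1) * (fact n :: nat)" by simp
  have f3: "fact (m + Suc n) = (m+n+1) * (fact (m+n) :: nat)" by simp
  have "superC m (Suc n) * of_nat (m+n+1) = 2 * of_nat (2*n+1) * superC m n"
    unfolding superC_def f1 f2 f3 of_nat_mult of_nat_numeral
    by (rule gB) (simp del: of_nat_Suc of_nat_add add: of_nat_eq_0_iff)+
  then show ?thesis by simp
qed

lemma four: "4 * superC m n = superC (Suc m) n + superC m (Suc n)"
proof -
  have p: "(of_nat (m+n+1) :: rat) \<noteq> 0" by simp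
  have "(superC (Suc m) n + superC m (Suc n)) * of_nat (m+n+1) = 4 * superC m n * of_nat (m+n+1)"
    using stepA[of m n] stepB[of m n] by (simp add: algebra_simps)
  then show ?thesis using p by simp
qed

lemma superC_comm: "superC a b = superC b a"
  unfolding superC_def by (simp add: add.commute mult.commute mult.left_commute)

lemma Hstep: "H a b (int (Suc c)) = 4 * H a b (int c) + H (b+1) (a+1) (int (Suc c) - 2)"
proof -
  have e1: "nat (int b + int (Suc c)) = Suc (b+c)" by simp
  have e2: "nat (int a + int (Suc c)) = Suc (a+c)" by simp
  have e3: "nat (int b + int c) = b+c" by simp
  have e4: "nat (int a + int c) = a+c" by simp
  have e5: "nat (int (a+1) + (int (Suc c) - 2)) = a+c" by simp
  have e6: "nat (int (b+1) + (int (Suc c) - 2)) = b+c" by simp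
  show ?thesis unfolding H_def e1 e2 e3 e4 e5 e6
    using four[of a "b+c"] four[of b "a+c"] by simp
qed

theorem corollary8p10:
  fixes a b c :: nat
  shows "H a b (int c) / 4 ^ c = (\<Sum>j = 1..c. H (b+1) (a+1) (int j - 2) / 4 ^ j)"
proof (induction c)
  case 0
  then show ?case by (simp add: H_def superC_comm)
next
  case (Suc c)
  have "H a b (int (Suc c)) / 4 ^ Suc c = H a b (int c) / 4 ^ c + H (b+1) (a+1) (int (Suc c) - 2) / 4 ^ Suc c"
    unfolding Hstep by (simp add: field_simps)
  also have "\<dots> = (\<Sum>j = 1..Suc c. H (b+1) (a+1) (int j - 2) / 4 ^ j)"
    using Suc by simp
  finally show ?case .
qed

end
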